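(* Let $d\ge1$, $x_1<x_2$, $x_0\in[x_1,x_2]$, let $p,r_1,\dots,r_d$ be functions on $[x_1,x_2]$ and $u_0$ a nonvanishing function on $[x_1,x_2]$ such that $M_0=\sup_{[x_1,x_2]}\frac{1}{|pu_0^2|}$ and $M_i=\sup_{[x_1,x_2]}|r_iu_0^2|$ ($i=1,\dots,d$) are finite. Then for every admissible $\mathbf j=\mathbf m+\frac1d\mathbf 1$ with $\mathbf m\in\mathbb Z_{\ge0}^d$ and every $x\in[x_1,x_2]$, $$|X^{(\mathbf j)}(x)|\le c_{\mathbf j}\,M_0^{\left[\frac{|\mathbf j|+1}{2}\right]}M_1^{\left[\frac{j_1-1/d+1}{2}\right]}\cdots M_d^{\left[\frac{j_d-1/d+1}{2}\right]}\,|x-x_0|^{|\mathbf j|}.$$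
   Context: $[a]$ denotes the greatest integer not exceeding $a$. Notation: $\int f$ denotes $x\mapsto\int_{x_0}^x f(s)\,ds$; $|\mathbf j|=j_1+\cdots+j_d$; $\delta_i$ the $i$-th standard basis vector; $\mathbf 1=(1,\dots,1)$. Formal powers $X$ are indexed by $\mathbf j=\mathbf m+\frac1d\mathbf 1$ with $\mathbf m\in\mathbb Z^d$ (so $|\mathbf j|=|\mathbf m|+1$); $\mathbf j$ is admissible if at most one $m_i$ is odd. Set $X^{(\frac1d\mathbf 1-\delta_i)}\equiv\frac1d$ ($i=1,\dots,d$); $X^{(\mathbf m+\frac1d\mathbf 1)}\equiv0$ if some $m_i<0$ and $\mathbf m\notin\{-\delta_1,\dots,-\delta_d\}$; for admissible $\mathbf j$ with $\mathbf m\ge0$: if $|\mathbf j|$ is even (exactly one $m_i$ odd), $X^{(\mathbf j)}=|\mathbf j|\int r_iu_0^2X^{(\mathbf j-\delta_i)}$ for that $i$; if $|\mathbf j|$ is odd, $X^{(\mathbf j)}=|\mathbf j|\int\frac{1}{pu_0^2}\sum_{i=1}^dX^{(\mathbf j-\delta_i)}$. The numbers $c_{\mathbf j}$ are defined by $c_{\frac1d\mathbf 1-\delta_i}=1$, $c_{\mathbf m+\frac1d\mathbf 1}=0$ if some $m_i<0$ and $\mathbf m\notin\{-\delta_1,\dots,-\delta_d\}$, and for admissible $\mathbf j$ with $\mathbf m\ge0$: $c_{\mathbf j}=c_{\mathbf j-\delta_i}$ if $|\mathbf j|$ is even (with $m_i$ the odd entry), $c_{\mathbf j}=\sum_{i=1}^dc_{\mathbf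 j-\delta_i}$ if $|\mathbf j|$ is odd. *)

theory Defs
  imports "HOL-Analysis.Analysis"
begin

text \<open>Multi-indices m in Z^d are vectors of type int^'n with d = CARD('n).
  The formal index j = m + (1/d) 1 is represented by m; |j| = |m| + 1.\<close>

definition delta :: "'n::finite \<Rightarrow> int^'n" where
  "delta i = (\<chi> k. if k = i then 1 else 0)"

definition msum :: "int^'n::finite \<Rightarrow> int" where
  "msum m = (\<Sum>i\<in>UNIV. m $ i)"

definition admissible :: "int^'n::finite \<Rightarrow> bool" where
  "admissible m \<longleftrightarrow> card {i. odd (m $ i)} \<le> 1"

definition oint :: "real \<Rightarrow> real \<Rightarrow> (real \<Rightarrow> real) \<Rightarrow> real" where
  "oint a b f = (if a \<le> b then integral {a..b} f else - integral {b..a} f)"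

lemma msum_minus_delta: "msum (m - delta i) = msum m - 1"
  by (simp add: msum_def delta_def sum_subtractf)

lemma msum_nonneg: "\<forall>i. 0 \<le> m $ i \<Longrightarrow> 0 \<le> msum m"
  by (simp add: msum_def sum_nonneg)

function Xfun :: "(real \<Rightarrow> real) \<Rightarrow> ('n::finite \<Rightarrow> real \<Rightarrow> real) \<Rightarrow> (real \<Rightarrow> real)
    \<Rightarrow> real \<Rightarrow> int^'n \<Rightarrow> real \<Rightarrow> real" where
  "Xfun p r u0 x0 m =
    (if \<exists>i. m = - delta i then (\<lambda>x. 1 / real CARD('n))
     else if \<not> (\<forall>i. 0 \<le> m $ i) then (\<lambda>x. 0)
     else if \<not> admissible m then (\<lambda>x. 0)
     else if odd (msum m) then
       (\<lambda>x. real_of_int (msum m + 1) *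
          oint x0 x (\<lambda>s. r (THE i. odd (m $ i)) s * (u0 s)\<^sup>2 *
                         Xfun p r u0 x0 (m - delta (THE i. odd (m $ i))) s))
     else
       (\<lambda>x. real_of_int (msum m + 1) *
          oint x0 x (\<lambda>s. 1 / (p s * (u0 s)\<^sup>2) *
                         (\<Sum>i\<in>UNIV. Xfun p r u0 x0 (m - delta i) s))))"
  by pat_completeness auto
termination
  by (relation "Wellfounded.measure (\<lambda>(p, r, u0, x0, m). nat (msum m + 1))")
     (auto simp: msum_minus_delta dest: msum_nonneg)

function cfun :: "int^'n::finite \<Rightarrow> nat" where
  "cfun m =
    (if \<exists>i. m = - delta i then 1
     else if \<not> (\<forall>i. 0 \<le> m $ i) then 0
     else if \<not> admissible m then 0
     else if odd (msum m) then cfun (m - delta (THE i. odd (m $ i)))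
     else (\<Sum>i\<in>UNIV. cfun (m - delta i)))"
  by pat_completeness auto
termination
  by (relation "Wellfounded.measure (\<lambda>m. nat (msum m + 1))")
     (auto simp: msum_minus_delta dest: msum_nonneg)

end

theory Submission
  imports Defs
begin

lemma pow_int:
  fixes a b C :: real
  assumes "a \<le> b"
  shows "((\<lambda>s. C * (s - a) ^ n) has_integral C * (b - a) ^ Suc n / real (Suc n)) {a..b}"
proof -
  have "((\<lambda>s. C * (s - a) ^ n) has_integral
     ((\<lambda>s. C * (s - a) ^ Suc n / real (Suc n)) b - (\<lambda>s. C * (s - a) ^ Suc n / real (Suc n)) a)) {a..b}"
    apply (rule fundamental_theorem_of_calculus[OF assms])
    apply (auto intro!: derivative_eq_intros simp: has_real_derivative_iff_has_vector_derivative[symmetric])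
    apply (case_tac n; auto simp: field_simps)
    done
  then show ?thesis by simp
qed

lemma pow_int2:
  fixes a b C :: real
  assumes "a \<le> b"
  shows "((\<lambda>s. C * (b - s) ^ n) has_integral C * (b - a) ^ Suc n / real (Suc n)) {a..b}"
proof -
  have "((\<lambda>s. C * (b - s) ^ n) has_integral
     ((\<lambda>s. - C * (b - s) ^ Suc n / real (Suc n)) b - (\<lambda>s. - C * (b - s) ^ Suc n / real (Suc n)) a)) {a..b}"
    apply (rule fundamental_theorem_of_calculus[OF assms])
    apply (auto intro!: derivative_eq_intros simp: has_real_derivative_iff_has_vector_derivative[symmetric])
    apply (case_tac n; auto simp: field_simps)
    done
  then show ?thesis by simp
qed

lemma oint_bound:
  fixes f :: "real \<Rightarrow> real" and C x0 x :: real
  assumes C: "C \<ge> 0"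
    and hf: "\<And>s. s \<in> closed_segment x0 x \<Longrightarrow> \<bar>f s\<bar> \<le> C * \<bar>s - x0\<bar> ^ n"
  shows "\<bar>oint x0 x f\<bar> \<le> C * \<bar>x - x0\<bar> ^ Suc n / real (Suc n)"
proof (cases "x0 \<le> x")
  case True
  have g: "((\<lambda>s. C * (s - x0) ^ n) has_integral C * (x - x0) ^ Suc n / real (Suc n)) {x0..x}"
    by (rule pow_int[OF True])
  have seg: "closed_segment x0 x = {x0..x}" using True by (simp add: closed_segment_eq_real_ivl)
  have "\<bar>integral {x0..x} f\<bar> \<le> C * (x - x0) ^ Suc n / real (Suc n)"
  proof (cases "f integrable_on {x0..x}")
    case True
    have "norm (integral {x0..x} f) \<le> integral {x0..x} (\<lambda>s. C * (s - x0) ^ n)"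
      apply (rule integral_norm_bound_integral[OF True])
      using g hf seg by auto
    moreover note integral_unique[OF g]
    ultimately show ?thesis by simp
  next
    case False
    then show ?thesis using C \<open>x0 \<le> x\<close> by (simp add: not_integrable_integral)
  qed
  then show ?thesis using True by (simp add: oint_def)
next
  case False
  then have le: "x \<le> x0" by simp
  have g: "((\<lambda>s. C * (x0 - s) ^ n) has_integral C * (x0 - x) ^ Suc n / real (Suc n)) {x..x0}"
    by (rule pow_int2[OF le])
  have seg: "closed_segment x0 x = {x..x0}" using le by (simp add: closed_segment_eq_real_ivl)
  have "\<bar>integral {x..x0} f\<bar> \<le> C * (x0 - x) ^ Suc n / real (Suc n)"
  proof (cases "f integrable_on {x..x0}")
    case True
    have "norm (integral {x..x0} f) \<le> integral {x..x0} (\<lambda>s. C * (x0 - s) ^ n)"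
      apply (rule integral_norm_bound_integral[OF True])
      using g hf seg by (auto simp: abs_minus_commute)
    moreover note integral_unique[OF g]
    ultimately show ?thesis by simp
  next
    case False
    then show ?thesis using C le by (simp add: not_integrable_integral)
  qed
  then show ?thesis using False by (simp add: oint_def abs_minus_commute)
qed

declare Xfun.simps[simp del] cfun.simps[simp del]

lemma msum_neg_delta: "msum (- delta i :: int^'n::finite) = -1"
  by (simp add: msum_def delta_def sum_negf)

lemma K_step_odd:
  fixes M :: "'n::finite \<Rightarrow> real" and m :: "int^'n"
  assumes "odd (m $ i0)" "0 \<le> m $ i0"
  shows "(\<Prod>k\<in>UNIV. M k ^ nat ((m $ k + 1) div 2))
     = M i0 * (\<Prod>k\<in>UNIV. M k ^ nat (((m - delta i0) $ k + 1) div 2))"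
proof -
  have e: "nat ((m $ k + 1) div 2) = nat (((m - delta i0) $ k + 1) div 2) + (if k = i0 then 1 else 0)" for k
    using assms by (auto simp: delta_def elim!: oddE)
  have "(\<Prod>k\<in>UNIV. M k ^ nat ((m $ k + 1) div 2))
     = (\<Prod>k\<in>UNIV. M k ^ nat (((m - delta i0) $ k + 1) div 2) * (if k = i0 then M k else 1))"
    by (rule prod.cong) (auto simp: e)
  also have "\<dots> = M i0 * (\<Prod>k\<in>UNIV. M k ^ nat (((m - delta i0) $ k + 1) div 2))"
    by (simp add: prod.distrib prod.delta)
  finally show ?thesis .
qed

lemma K_step_even:
  fixes M :: "'n::finite \<Rightarrow> real" and m :: "int^'n"
  assumes "\<forall>k. even (m $ k)"
  shows "(\<Prod>k\<in>UNIV. M k ^ nat (((m - delta i) $ k + 1) div 2)) = (\<Prod>k\<in>UNIV. M k ^ nat ((m $ k + 1) div 2))"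
proof (rule prod.cong)
  fix k show "M k ^ nat (((m - delta i) $ k + 1) div 2) = M k ^ nat ((m $ k + 1) div 2)"
    using assms[rule_format, of k] by (auto simp: delta_def elim!: evenE)
qed simp

lemma main_gen:
  fixes p u0 :: "real \<Rightarrow> real" and r :: "'n::finite \<Rightarrow> real \<Rightarrow> real"
    and x1 x2 x0 :: real and m :: "int^'n"
  assumes x12: "x1 < x2" and x0: "x0 \<in> {x1..x2}"
    and bp: "bdd_above ((\<lambda>y. 1 / \<bar>p y * (u0 y)\<^sup>2\<bar>) ` {x1..x2})"
    and br: "\<forall>i. bdd_above ((\<lambda>y. \<bar>r i y * (u0 y)\<^sup>2\<bar>) ` {x1..x2})"
  defines "M0 \<equiv> (SUP y\<in>{x1..x2}. 1 / \<bar>p y * (u0 y)\<^sup>2\<bar>)"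
    and "M \<equiv> (\<lambda>i. SUP y\<in>{x1..x2}. \<bar>r i y * (u0 y)\<^sup>2\<bar>)"
  shows "\<forall>x\<in>{x1..x2}. \<bar>Xfun p r u0 x0 m x\<bar> \<le>
      real (cfun m) * (M0 ^ nat ((msum m + 2) div 2)
      * (\<Prod>i\<in>UNIV. M i ^ nat ((m $ i + 1) div 2)))
      * \<bar>x - x0\<bar> ^ nat (msum m + 1)"
proof (induction "nat (msum m + 1)" arbitrary: m rule: less_induct)
  case less
  define K where "K = (\<lambda>m :: int^'n. M0 ^ nat ((msum m + 2) div 2)
      * (\<Prod>i\<in>UNIV. M i ^ nat ((m $ i + 1) div 2)))"
  have ne: "{x1..x2} \<noteq> {}" using x12 by simp
  have M0up: "1 / \<bar>p y * (u0 y)\<^sup>2\<bar> \<le> M0" if "y \<in> {x1..x2}" for y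
    unfolding M0_def using bp that by (rule cSUP_upper2) simp
  have Mup: "\<bar>r i y * (u0 y)\<^sup>2\<bar> \<le> M i" if "y \<in> {x1..x2}" for i y
    unfolding M_def using br that by (intro cSUP_upper2) auto
  have M0nn: "0 \<le> M0" using M0up[of x1] x12 by (smt (verit) atLeastAtMost_iff divide_nonneg_nonneg abs_ge_zero)
  have Mnn: "0 \<le> M i" for i using Mup[of x1 i] x12 by (smt (verit) atLeastAtMost_iff abs_ge_zero)
  have Knn: "0 \<le> K m'" for m' unfolding K_def using M0nn Mnn by (auto intro!: mult_nonneg_nonneg prod_nonneg)
  have seg: "closed_segment x0 x \<subseteq> {x1..x2}" if "x \<in> {x1..x2}" for x
    using x0 that by (simp add: closed_segment_eq_real_ivl)
  have Kd: "K m = M0 ^ nat ((msum m + 2) div 2) * (\<Prod>i\<in>UNIV. M i ^ nat ((m $ i + 1) div 2))"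
    by (simp add: K_def)
  show ?case unfolding Kd[symmetric]
  proof
    fix x assume x: "x \<in> {x1..x2}"
    show "\<bar>Xfun p r u0 x0 m x\<bar> \<le> real (cfun m) * K m * \<bar>x - x0\<bar> ^ nat (msum m + 1)"
    proof (cases "\<exists>i. m = - delta i")
      case True
      then obtain i where mi: "m = - delta i" by blast
      have X: "Xfun p r u0 x0 m x = 1 / real CARD('n)" by (subst Xfun.simps) (use True in auto)
      have c: "cfun m = 1" by (subst cfun.simps) (use True in auto)
      have e: "nat (((- delta i :: int^'n) $ k + 1) div 2) = 0" for k by (simp add: delta_def)
      have K: "K m = 1" unfolding K_def mi msum_neg_delta using e by simp
      have "1 / real CARD('n) \<le> 1" by (simp add: field_simps)
      moreover have "msum m = -1" using mi msum_neg_delta by simp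
      ultimately show ?thesis by (simp add: X c K)
    next
      case notd: False
      show ?thesis
      proof (cases "(\<forall>i. 0 \<le> m $ i) \<and> admissible m")
        case False
        have X: "Xfun p r u0 x0 m x = 0" by (subst Xfun.simps) (use False notd in auto)
        show ?thesis by (simp add: X Knn)
      next
        case True
        then have nn: "\<forall>i. 0 \<le> m $ i" and adm: "admissible m" by auto
        have ms: "0 \<le> msum m" using nn by (rule msum_nonneg)
        have uniq: "i = k" if "odd (m $ i)" "odd (m $ k)" for i k
        proof (rule ccontr)
          assume "i \<noteq> k"
          then have "{i, k} \<subseteq> {i. odd (m $ i)}" using that by auto
          then have "card {i, k} \<le> card {i. odd (m $ i)}" by (intro card_mono) auto
          then show False using adm \<open>i \<noteq> k\<close> by (simp add: admissible_def)
        qed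
        have par: "even (msum m) \<longleftrightarrow> even (card {i. odd (m $ i)})"
          unfolding msum_def by (simp add: even_sum_iff)
        have cardle: "card {i. odd (m $ i)} \<le> 1" using adm by (simp add: admissible_def)
        show ?thesis
        proof (cases "odd (msum m)")
          case odd: True
          define i0 where "i0 = (THE i. odd (m $ i))"
          have "odd (card {i. odd (m $ i)})" using par odd by simp
          then have "{i. odd (m $ i)} \<noteq> {}" by (metis card.empty even_zero)
          then obtain i1 where "odd (m $ i1)" by blast
          then have oi0: "odd (m $ i0)" unfolding i0_def
            using theI[of "\<lambda>i. odd (m $ i)" i1] uniq by blast
          define m' where "m' = m - delta i0"
          have msm': "msum m' = msum m - 1" by (simp add: m'_def msum_minus_delta)
          have IH: "\<forall>s\<in>{x1..x2}. \<bar>Xfun p r u0 x0 m' s\<bar> \<le> real (cfun m') * K m' * \<bar>s - x0\<bar> ^ nat (msum m' + 1)"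
            using less(1)[of m'] ms msm' unfolding K_def by simp
          have X: "Xfun p r u0 x0 m x = real_of_int (msum m + 1) *
              oint x0 x (\<lambda>s. r i0 s * (u0 s)\<^sup>2 * Xfun p r u0 x0 m' s)"
            by (subst Xfun.simps) (use notd True odd in \<open>simp add: i0_def m'_def\<close>)
          have c: "cfun m = cfun m'" by (subst cfun.simps) (use notd True odd in \<open>simp add: i0_def m'_def\<close>)
          have K: "K m = M i0 * K m'"
          proof -
            have "(msum m + 2) div 2 = (msum m' + 2) div 2" using odd msm' by (auto elim!: oddE)
            then show ?thesis unfolding K_def m'_def
              using K_step_odd[OF oi0 nn[rule_format], of M] by (simp add: m'_def)
          qed
          define n where "n = nat (msum m)"
          have nm': "nat (msum m' + 1) = n" using msm' by (simp add: n_def)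
          have nm: "nat (msum m + 1) = Suc n" using ms by (simp add: n_def)
          have "\<bar>oint x0 x (\<lambda>s. r i0 s * (u0 s)\<^sup>2 * Xfun p r u0 x0 m' s)\<bar>
              \<le> (M i0 * real (cfun m') * K m') * \<bar>x - x0\<bar> ^ Suc n / real (Suc n)"
          proof (rule oint_bound)
            show "0 \<le> M i0 * real (cfun m') * K m'" using Mnn Knn by simp
            fix s assume "s \<in> closed_segment x0 x"
            then have s: "s \<in> {x1..x2}" using seg[OF x] by auto
            have "\<bar>r i0 s * (u0 s)\<^sup>2 * Xfun p r u0 x0 m' s\<bar> = \<bar>r i0 s * (u0 s)\<^sup>2\<bar> * \<bar>Xfun p r u0 x0 m' s\<bar>"
              by (simp add: abs_mult)
            also have "\<dots> \<le> M i0 * (real (cfun m') * K m' * \<bar>s - x0\<bar> ^ n)"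
              using IH s Mup[OF s, of i0] nm' by (intro mult_mono) auto
            finally show "\<bar>r i0 s * (u0 s)\<^sup>2 * Xfun p r u0 x0 m' s\<bar> \<le> M i0 * real (cfun m') * K m' * \<bar>s - x0\<bar> ^ n"
              by (simp add: mult.assoc)
          qed
          moreover have "real_of_int (msum m + 1) = real (Suc n)" using ms by (simp add: n_def)
          ultimately show ?thesis using ms
            by (simp add: X c K nm abs_mult) (simp add: field_simps)
        next
          case even: False
          have allev: "\<forall>k. even (m $ k)"
          proof -
            have "card {i. odd (m $ i)} = 0" using par even cardle by (cases "card {i. odd (m $ i)}") auto
            then show ?thesis by simp
          qed
          have msd: "msum (m - delta i) = msum m - 1" for i by (simp add: msum_minus_delta)
          have IH: "\<forall>s\<in>{x1..x2}. \<bar>Xfun p r u0 x0 (m - delta i) s\<bar> \<le> real (cfun (m - delta i)) * K (m - delta i) * \<bar>s - x0\<bar> ^ nat (msum m)" for i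
            using less(1)[of "m - delta i"] ms msd[of i] unfolding K_def by simp
          have X: "Xfun p r u0 x0 m x = real_of_int (msum m + 1) *
              oint x0 x (\<lambda>s. 1 / (p s * (u0 s)\<^sup>2) * (\<Sum>i\<in>UNIV. Xfun p r u0 x0 (m - delta i) s))"
            by (subst Xfun.simps) (use notd True even in simp)
          have c: "cfun m = (\<Sum>i\<in>UNIV. cfun (m - delta i))"
            by (subst cfun.simps) (use notd True even in simp)
          have K: "K m = M0 * K (m - delta i)" for i
          proof -
            have "nat ((msum m + 2) div 2) = Suc (nat ((msum (m - delta i) + 2) div 2))"
              using even ms msd[of i] by (auto elim!: evenE)
            then show ?thesis unfolding K_def
              using K_step_even[OF allev, of M i] by simp
          qed
          define n where "n = nat (msum m)"
          have nm: "nat (msum m + 1) = Suc n" using ms by (simp add: n_def)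
          have "\<bar>oint x0 x (\<lambda>s. 1 / (p s * (u0 s)\<^sup>2) * (\<Sum>i\<in>UNIV. Xfun p r u0 x0 (m - delta i) s))\<bar>
              \<le> (real (cfun m) * K m) * \<bar>x - x0\<bar> ^ Suc n / real (Suc n)"
          proof (rule oint_bound)
            show "0 \<le> real (cfun m) * K m" using Knn by simp
            fix s assume "s \<in> closed_segment x0 x"
            then have s: "s \<in> {x1..x2}" using seg[OF x] by auto
            have "\<bar>1 / (p s * (u0 s)\<^sup>2) * (\<Sum>i\<in>UNIV. Xfun p r u0 x0 (m - delta i) s)\<bar>
                = (1 / \<bar>p s * (u0 s)\<^sup>2\<bar>) * \<bar>\<Sum>i\<in>UNIV. Xfun p r u0 x0 (m - delta i) s\<bar>"
              by (simp add: abs_mult)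
            also have "\<dots> \<le> M0 * (\<Sum>i\<in>UNIV. real (cfun (m - delta i)) * K (m - delta i) * \<bar>s - x0\<bar> ^ n)"
            proof (rule mult_mono)
              show "\<bar>\<Sum>i\<in>UNIV. Xfun p r u0 x0 (m - delta i) s\<bar> \<le> (\<Sum>i\<in>UNIV. real (cfun (m - delta i)) * K (m - delta i) * \<bar>s - x0\<bar> ^ n)"
                by (rule order_trans[OF sum_abs sum_mono]) (use IH s in \<open>auto simp: n_def\<close>)
            qed (use M0up[OF s] M0nn in auto)
            also have "\<dots> = (\<Sum>i\<in>UNIV. real (cfun (m - delta i))) * K m * \<bar>s - x0\<bar> ^ n"
              unfolding sum_distrib_left sum_distrib_right
              by (rule sum.cong) (simp, subst K, simp add: mult_ac, blast)
            finally show "\<bar>1 / (p s * (u0 s)\<^sup>2) * (\<Sum>i\<in>UNIV. Xfun p r u0 x0 (m - delta i) s)\<bar> \<le> real (cfun m) * K m * \<bar>s - x0\<bar> ^ n"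
              by (simp add: c)
          qed
          moreover have "real_of_int (msum m + 1) = real (Suc n)" using ms by (simp add: n_def)
          ultimately show ?thesis using ms
            by (simp add: X nm abs_mult) (simp add: field_simps)
        qed
      qed
    qed
  qed
qed

theorem mainTheorem5:
  fixes p u0 :: "real \<Rightarrow> real" and r :: "'n::finite \<Rightarrow> real \<Rightarrow> real"
    and x1 x2 x0 x :: real and m :: "int^'n"
  assumes "x1 < x2" and "x0 \<in> {x1..x2}"
    and "\<forall>y\<in>{x1..x2}. u0 y \<noteq> 0"
    and "\<forall>y\<in>{x1..x2}. p y \<noteq> 0"
    and "bdd_above ((\<lambda>y. 1 / \<bar>p y * (u0 y)\<^sup>2\<bar>) ` {x1..x2})"
    and "\<forall>i. bdd_above ((\<lambda>y. \<bar>r i y * (u0 y)\<^sup>2\<bar>) ` {x1..x2})"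
    and "\<forall>i. 0 \<le> m $ i" and "admissible m"
    and "x \<in> {x1..x2}"
  shows "\<bar>Xfun p r u0 x0 m x\<bar> \<le>
      real (cfun m)
      * (SUP y\<in>{x1..x2}. 1 / \<bar>p y * (u0 y)\<^sup>2\<bar>) ^ nat ((msum m + 2) div 2)
      * (\<Prod>i\<in>UNIV. (SUP y\<in>{x1..x2}. \<bar>r i y * (u0 y)\<^sup>2\<bar>) ^ nat ((m $ i + 1) div 2))
      * \<bar>x - x0\<bar> ^ nat (msum m + 1)"
  using main_gen[OF assms(1,2,5,6), of m] assms(9) by (simp add: mult.assoc)

end
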